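(* Let $m,n\ge r\ge1$, let $L:\mathbb{R}^{m\times n}\to\mathbb{R}$ be differentiable and let $\lambda>0$. For $A\in\mathbb{R}^{m\times r}$, $B\in\mathbb{R}^{n\times r}$ let $\mathcal{L}_{L2}(A,B)=L(AB^\top)+\frac{\lambda}{2}\left(\|A\|_F^2+\|B\|_F^2\right)$, and for $W\in\mathbb{R}^{m\times n}$ let $\mathcal{L}_*(W)=L(W)+\lambda\|W\|_*$. Then $(A,B)$ is a local minimum of $\mathcal{L}_{L2}$ if and only if (1) $W=AB^\top$ is a local minimum of $\mathcal{L}_*$ restricted to the set of $m\times n$ matrices of rank at most $r$ (the maximal rank achievable by a product $AB^\top$ of such factors), and (2) $A^\top A=B^\top B$.
   Context: $\|\cdot\|_F$ is the Frobenius norm and $\|W\|_*=\operatorname{Tr}(\sqrt{WW^\top})$ is the nuclear norm (sum of singular values). A local minimum of $\mathcal{L}_*$ restricted to a set $\mathcal{M}$ means a point $W\in\mathcal{M}$ such that $\mathcal{L}_*(W')\ge\mathcal{L}_*(W)$ for all $W'\in\mathcal{M}$ in a neighbourhood of $W$. *)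

theory Defs
  imports "HOL-Analysis.Analysis"
begin

definition frob_sq :: "real^'n^'m \<Rightarrow> real" where
  "frob_sq A = (\<Sum>i\<in>UNIV. \<Sum>j\<in>UNIV. (A $ i $ j)^2)"

definition psd :: "real^'n^'n \<Rightarrow> bool" where
  "psd S \<longleftrightarrow> transpose S = S \<and> (\<forall>x. 0 \<le> x \<bullet> (S *v x))"

definition mat_sqrt :: "real^'n^'n \<Rightarrow> real^'n^'n" where
  "mat_sqrt M = (THE S. psd S \<and> S ** S = M)"

definition nuclear_norm :: "real^'n^'m \<Rightarrow> real" where
  "nuclear_norm W = trace (mat_sqrt (W ** transpose W))"

definition local_min_on :: "('a::topological_space \<Rightarrow> real) \<Rightarrow> 'a set \<Rightarrow> 'a \<Rightarrow> bool" where
  "local_min_on f M x \<longleftrightarrow> x \<in> M \<and>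
     (\<exists>U. open U \<and> x \<in> U \<and> (\<forall>y\<in>U \<inter> M. f x \<le> f y))"

definition L_L2 :: "(real^'n^'m \<Rightarrow> real) \<Rightarrow> real \<Rightarrow> (real^'r^'m) \<times> (real^'r^'n) \<Rightarrow> real" where
  "L_L2 L lam AB = L (fst AB ** transpose (snd AB)) + lam / 2 * (frob_sq (fst AB) + frob_sq (snd AB))"

definition L_nuc :: "(real^'n^'m \<Rightarrow> real) \<Rightarrow> real \<Rightarrow> real^'n^'m \<Rightarrow> real" where
  "L_nuc L lam W = L W + lam * nuclear_norm W"

end

theory Submission
  imports Defs
begin


lemma frob_inner: "frob_sq (A::real^'n^'m) = A \<bullet> A"
  by (simp add: frob_sq_def inner_vec_def power2_eq_square)

lemma frob_norm: "frob_sq (A::real^'n^'m) = (norm A)^2"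
  by (simp add: frob_inner power2_norm_eq_inner)

lemma trace_AAt: "trace ((A::real^'n^'m) ** transpose A) = frob_sq A"
  by (simp add: trace_def frob_sq_def matrix_matrix_mult_def transpose_def power2_eq_square)

lemma trace_AtA: "trace (transpose (A::real^'n^'m) ** A) = frob_sq A"
  by (simp add: trace_def frob_sq_def matrix_matrix_mult_def transpose_def power2_eq_square)
     (rule sum.swap)

lemma inner_mv: "(x::real^'m) \<bullet> ((A::real^'n^'m) *v y) = (transpose A *v x) \<bullet> y"
  by (metis dot_lmul_matrix transpose_matrix_vector)

lemma sym_inner: "transpose (M::real^'n^'n) = M \<Longrightarrow> x \<bullet> (M *v y) = (M *v x) \<bullet> y"
  by (metis inner_mv)

definition onb :: "('a::euclidean_space) set \<Rightarrow> bool" where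
  "onb U \<longleftrightarrow> finite U \<and> pairwise orthogonal U \<and> (\<forall>u\<in>U. norm u = 1) \<and> span U = UNIV"

lemma onb_expand: "onb U \<Longrightarrow> (\<Sum>u\<in>U. (x \<bullet> u) *\<^sub>R u) = x"
  unfolding onb_def by (intro orthonormal_basis_expand) auto

lemma onb_inner: "onb U \<Longrightarrow> u \<in> U \<Longrightarrow> v \<in> U \<Longrightarrow> u \<bullet> v = (if u = v then 1 else 0)"
  unfolding onb_def pairwise_def orthogonal_def by (auto simp: norm_eq_1)

lemma onb_parseval: "onb U \<Longrightarrow> (\<Sum>u\<in>U. (x \<bullet> u) * (y \<bullet> u)) = x \<bullet> y"
proof -
  assume U: "onb U"
  have "x \<bullet> y = x \<bullet> (\<Sum>u\<in>U. (y \<bullet> u) *\<^sub>R u)" using onb_expand[OF U] by simp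
  also have "\<dots> = (\<Sum>u\<in>U. (x \<bullet> u) * (y \<bullet> u))"
    by (simp add: inner_sum_right mult.commute)
  finally show ?thesis by simp
qed

lemma rayleigh_eig:
  fixes M :: "real^'n^'n"
  assumes sym: "transpose M = M" and v: "v \<bullet> v = 1"
    and w: "w = M *v v - (v \<bullet> (M *v v)) *\<^sub>R v"
    and le: "\<And>t. 0 < t \<Longrightarrow> (v + t *\<^sub>R w) \<bullet> (M *v (v + t *\<^sub>R w))
                 \<le> (v \<bullet> (M *v v)) * ((v + t *\<^sub>R w) \<bullet> (v + t *\<^sub>R w))"
  shows "w = 0"
proof -
  define \<mu> where "\<mu> = v \<bullet> (M *v v)"
  have wv: "w \<bullet> v = 0" using v by (simp add: w inner_diff_left inner_commute[of "M *v v" v])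
  have wMv: "w \<bullet> (M *v v) = w \<bullet> w"
  proof -
    have "M *v v = w + \<mu> *\<^sub>R v" by (simp add: w \<mu>_def)
    then show ?thesis by (simp add: inner_add_right wv)
  qed
  have vMw: "v \<bullet> (M *v w) = w \<bullet> w"
    using sym_inner[OF sym, of v w] wMv by (simp add: inner_commute)
  define c where "c = \<mu> * (w \<bullet> w) - w \<bullet> (M *v w)"
  have key: "2 * (w \<bullet> w) \<le> t * c" if t: "0 < t" for t
  proof -
    have "(v + t *\<^sub>R w) \<bullet> (M *v (v + t *\<^sub>R w)) = \<mu> + 2 * t * (w \<bullet> w) + t^2 * (w \<bullet> (M *v w))"
      by (simp add: matrix_vector_right_distrib matrix_vector_mult_scaleR inner_add_left inner_add_right
          wMv vMw \<mu>_def power2_eq_square algebra_simps)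
    moreover have "(v + t *\<^sub>R w) \<bullet> (v + t *\<^sub>R w) = 1 + t^2 * (w \<bullet> w)"
      using v wv by (simp add: inner_add_left inner_add_right inner_commute power2_eq_square algebra_simps)
    ultimately have "\<mu> + 2 * t * (w \<bullet> w) + t^2 * (w \<bullet> (M *v w)) \<le> \<mu> * (1 + t^2 * (w \<bullet> w))"
      using le[OF t] by (simp add: \<mu>_def)
    then have "t * (2 * (w \<bullet> w)) \<le> t * (t * c)"
      by (simp add: c_def power2_eq_square algebra_simps)
    then show ?thesis using t by simp
  qed
  have "w \<bullet> w \<le> 0"
  proof (rule ccontr)
    assume "\<not> w \<bullet> w \<le> 0"
    then have p: "0 < w \<bullet> w" by linarith
    define t where "t = (w \<bullet> w) / (\<bar>c\<bar> + 1)"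
    have t0: "0 < t" using p by (simp add: t_def)
    have "t * c \<le> t * \<bar>c\<bar>" using t0 by (simp add: mult_left_mono)
    also have "\<dots> < w \<bullet> w"
      using p by (simp add: t_def field_simps)
    finally show False using key[OF t0] p by simp
  qed
  then show ?thesis using inner_ge_zero[of w] by simp
qed

lemma spectral:
  fixes M :: "real^'n^'n"
  assumes sym: "transpose M = M"
  obtains U where "onb U" "\<And>u. u \<in> U \<Longrightarrow> M *v u = (u \<bullet> (M *v u)) *\<^sub>R u"
proof -
  define P where "P U \<longleftrightarrow> pairwise orthogonal U \<and> (\<forall>u\<in>U. norm u = 1)
      \<and> (\<forall>u\<in>U. M *v u = (u \<bullet> (M *v u)) *\<^sub>R u)" for U :: "(real^'n) set"
  have ind: "independent U \<and> finite U \<and> card U \<le> CARD('n)" if "P U" for U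
  proof -
    have "0 \<notin> U" using that by (auto simp: P_def)
    then have "independent U" using that pairwise_orthogonal_independent by (auto simp: P_def)
    then show ?thesis using independent_bound by fastforce
  qed
  have "P {}" by (simp add: P_def)
  then obtain U where PU: "P U" and mx: "\<And>V. P V \<Longrightarrow> card V \<le> card U"
    using ex_has_greatest_nat[of P "{}" card "Suc CARD('n)"] ind by (metis less_Suc_eq_le)
  have fin: "finite U" using ind[OF PU] by simp
  have sp: "span U = UNIV"
  proof (rule ccontr)
    assume nsp: "span U \<noteq> UNIV"
    define V where "V = orthogonal_comp (span U)"
    have subV: "subspace V" unfolding V_def by (rule subspace_orthogonal_comp)
    have "V \<noteq> {0}"
    proof
      assume V0: "V = {0}"
      have "span U + V = UNIV" unfolding V_def by (rule subspace_sum_orthogonal_comp) simp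
      then have "span U = UNIV" using V0 by (auto simp: set_plus_def)
      with nsp show False by simp
    qed
    then obtain v0 where v0: "v0 \<in> V" "v0 \<noteq> 0" using subV subspace_0 by blast
    have MU: "M *v y \<in> span U" if "y \<in> span U" for y
    proof -
      have "(\<lambda>x. M *v x) ` U \<subseteq> span U"
        using PU by (auto simp: P_def) (metis span_base span_mul)
      then have "(\<lambda>x. M *v x) ` span U \<subseteq> span U"
        by (metis matrix_vector_mul_linear span_linear_image span_mono span_span)
      then show ?thesis using that by blast
    qed
    have inv: "M *v x \<in> V" if "x \<in> V" for x
      using that MU sym_inner[OF sym]
      by (auto simp: V_def orthogonal_comp_def orthogonal_def)
    define K where "K = V \<inter> sphere 0 1"
    have cK: "compact K" unfolding K_def
      by (intro closed_Int_compact closed_subspace subV compact_sphere)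
    have "v0 /\<^sub>R norm v0 \<in> K" using v0 subV by (auto simp: K_def subspace_scale)
    then have neK: "K \<noteq> {}" by blast
    have "continuous_on K (\<lambda>x. x \<bullet> (M *v x))"
      by (intro continuous_intros)
    then obtain v where vK: "v \<in> K" and vmax: "\<And>y. y \<in> K \<Longrightarrow> y \<bullet> (M *v y) \<le> v \<bullet> (M *v v)"
      using continuous_attains_sup[OF cK neK] by blast
    have vV: "v \<in> V" and nv: "norm v = 1" using vK by (auto simp: K_def)
    have vv: "v \<bullet> v = 1" using nv by (simp add: norm_eq_1)
    define w where "w = M *v v - (v \<bullet> (M *v v)) *\<^sub>R v"
    have wV: "w \<in> V" unfolding w_def using vV inv subV by (simp add: subspace_diff subspace_scale)
    have wv: "w \<bullet> v = 0" using vv by (simp add: w_def inner_diff_left inner_commute[of "M *v v" v])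
    have "w = 0"
    proof (rule rayleigh_eig[OF sym vv w_def])
      fix t :: real assume t: "0 < t"
      define x where "x = v + t *\<^sub>R w"
      have xV: "x \<in> V" unfolding x_def using vV wV subV by (simp add: subspace_add subspace_scale)
      have xv: "x \<bullet> v = 1" using vv wv by (simp add: x_def inner_add_left)
      then have x0: "x \<noteq> 0" by auto
      have "x /\<^sub>R norm x \<in> K" using xV x0 subV by (auto simp: K_def subspace_scale)
      from vmax[OF this] have "(x /\<^sub>R norm x) \<bullet> (M *v (x /\<^sub>R norm x)) \<le> v \<bullet> (M *v v)" .
      then have "(x \<bullet> (M *v x)) / (norm x)^2 \<le> v \<bullet> (M *v v)"
        by (simp add: matrix_vector_mult_scaleR power2_eq_square divide_inverse mult_ac)
      then have "x \<bullet> (M *v x) \<le> (v \<bullet> (M *v v)) * (norm x)^2"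
        using x0 by (simp add: divide_le_eq)
      then show "(v + t *\<^sub>R w) \<bullet> (M *v (v + t *\<^sub>R w)) \<le> (v \<bullet> (M *v v)) * ((v + t *\<^sub>R w) \<bullet> (v + t *\<^sub>R w))"
        by (simp add: x_def power2_norm_eq_inner)
    qed
    then have eig: "M *v v = (v \<bullet> (M *v v)) *\<^sub>R v" by (simp add: w_def)
    have vU: "v \<notin> U"
    proof
      assume "v \<in> U"
      then have "orthogonal v v" using vV by (auto simp: V_def orthogonal_comp_def span_base)
      then show False using vv by (simp add: orthogonal_def)
    qed
    have "P (insert v U)"
      using PU vV nv eig unfolding P_def
      by (auto simp: pairwise_insert V_def orthogonal_comp_def span_base orthogonal_commute)
    from mx[OF this] show False using fin vU by simp
  qed
  show ?thesis
    by (rule that) (use PU fin sp in \<open>auto simp: onb_def P_def\<close>)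
qed



lemma psd_sym: "psd S \<Longrightarrow> transpose S = S" by (simp add: psd_def)

lemma sym_from_inner:
  fixes S :: "real^'n^'n"
  assumes "\<And>x y. x \<bullet> (S *v y) = (S *v x) \<bullet> y"
  shows "transpose S = S"
proof -
  have "S *v y = transpose S *v y" for y
  proof -
    have "\<And>x. x \<bullet> (S *v y - transpose S *v y) = 0"
      using assms inner_mv[of _ "transpose S"] by (simp add: inner_diff_right)
    then show ?thesis by (metis inner_eq_zero_iff right_minus_eq)
  qed
  then show ?thesis by (metis matrix_eq)
qed

lemma mv_expand: "onb U \<Longrightarrow> (A::real^'n^'m) *v x = (\<Sum>u\<in>U. (x \<bullet> u) *\<^sub>R (A *v u))"
proof -
  assume U: "onb U"
  have "A *v x = A *v (\<Sum>u\<in>U. (x \<bullet> u) *\<^sub>R u)" using onb_expand[OF U] by simp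
  also have "\<dots> = (\<Sum>u\<in>U. (x \<bullet> u) *\<^sub>R (A *v u))" by (simp add: vec.sum matrix_vector_mult_scaleR)
  finally show ?thesis .
qed

lemma matrix_eq_onb:
  fixes A B :: "real^'n^'m"
  assumes U: "onb U" and eq: "\<And>u. u \<in> U \<Longrightarrow> A *v u = B *v u"
  shows "A = B"
proof -
  have "A *v x = B *v x" for x
    using mv_expand[OF U, of A x] mv_expand[OF U, of B x] eq by simp
  then show ?thesis by (metis matrix_eq)
qed

lemma root_on_eig:
  fixes S M :: "real^'n^'n"
  assumes S: "psd S" and SS: "S ** S = M" and eig: "M *v x = \<mu> *\<^sub>R x" and mu: "0 \<le> \<mu>"
  shows "S *v x = sqrt \<mu> *\<^sub>R x"
proof -
  define s where "s = sqrt \<mu>"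
  have s0: "0 \<le> s" and ss: "s * s = \<mu>" using mu by (auto simp: s_def)
  have sym: "transpose S = S" using S by (simp add: psd_def)
  define y where "y = S *v x - s *\<^sub>R x"
  have SSx: "S *v (S *v x) = \<mu> *\<^sub>R x" using SS eig by (simp add: matrix_vector_mul_assoc)
  have Sy: "S *v y = - s *\<^sub>R y"
    by (simp add: y_def matrix_vector_mult_diff_distrib matrix_vector_mult_scaleR SSx
        algebra_simps ss[symmetric])
  have "y = 0"
  proof (cases "s = 0")
    case True
    then have "y = S *v x" and "S *v y = 0" using Sy by (auto simp: y_def)
    then have "y \<bullet> y = x \<bullet> (S *v y)" using sym_inner[OF sym, of x y] by (simp add: inner_commute)
    then show ?thesis using \<open>S *v y = 0\<close> by simp
  next
    case False
    then have sp: "0 < s" using s0 by simp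
    have "0 \<le> y \<bullet> (S *v y)" using S by (simp add: psd_def)
    then have "0 \<le> - s * (y \<bullet> y)" by (simp add: Sy)
    then have "y \<bullet> y \<le> 0" using sp by (simp add: mult_le_0_iff)
    then show ?thesis using inner_ge_zero[of y] by simp
  qed
  then show ?thesis by (simp add: y_def s_def)
qed

lemma psd_eig_nonneg:
  assumes "psd (M::real^'n^'n)" "M *v u = \<mu> *\<^sub>R u" "u \<bullet> u = 1"
  shows "0 \<le> \<mu>"
proof -
  have "0 \<le> u \<bullet> (M *v u)" using assms(1) by (simp add: psd_def)
  then show ?thesis using assms by simp
qed

lemma sqrt_exists:
  fixes M :: "real^'n^'n"
  assumes M: "psd M"
  shows "\<exists>S. psd S \<and> S ** S = M"
proof -
  obtain U where U: "onb U" and eig: "\<And>u. u \<in> U \<Longrightarrow> M *v u = (u \<bullet> (M *v u)) *\<^sub>R u"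
    using spectral[OF psd_sym[OF M]] by blast
  define \<mu> where "\<mu> u = u \<bullet> (M *v u)" for u
  have eig': "u \<in> U \<Longrightarrow> M *v u = \<mu> u *\<^sub>R u" for u using eig by (simp add: \<mu>_def)
  have mu0: "u \<in> U \<Longrightarrow> 0 \<le> \<mu> u" for u using M by (simp add: psd_def \<mu>_def)
  define f where "f x = (\<Sum>u\<in>U. (sqrt (\<mu> u) * (x \<bullet> u)) *\<^sub>R u)" for x :: "real^'n"
  have lf: "linear f"
    by (rule linearI) (simp_all add: f_def inner_add_left distrib_left scaleR_add_left sum.distrib
      scaleR_sum_right mult.left_commute)
  define S where "S = matrix f"
  have Sx: "S *v x = f x" for x using lf by (simp add: S_def fun_eq_iff)
  have fu: "f x \<bullet> v = sqrt (\<mu> v) * (x \<bullet> v)" if v: "v \<in> U" for x v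
  proof -
    have "f x \<bullet> v = (\<Sum>u\<in>U. sqrt (\<mu> u) * (x \<bullet> u) * (u \<bullet> v))"
      by (simp add: f_def inner_sum_left)
    also have "\<dots> = (\<Sum>u\<in>U. if u = v then sqrt (\<mu> v) * (x \<bullet> v) else 0)"
      by (rule sum.cong) (auto simp: onb_inner[OF U _ v])
    also have "\<dots> = sqrt (\<mu> v) * (x \<bullet> v)" using v U by (simp add: onb_def)
    finally show ?thesis .
  qed
  have inner_S: "x \<bullet> (S *v y) = (\<Sum>u\<in>U. sqrt (\<mu> u) * (x \<bullet> u) * (y \<bullet> u))" for x y
    by (simp add: Sx f_def inner_sum_right mult_ac)
  have psdS: "psd S"
  proof -
    have "transpose S = S"
      by (rule sym_from_inner) (simp add: inner_S inner_commute[of "S *v _"] mult_ac)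
    moreover have "0 \<le> x \<bullet> (S *v x)" for x
      by (simp add: inner_S) (intro sum_nonneg, simp add: mu0 mult_nonneg_nonneg mult.assoc)
    ultimately show ?thesis by (simp add: psd_def)
  qed
  have "S *v (S *v x) = M *v x" for x
  proof -
    have "S *v (S *v x) = (\<Sum>u\<in>U. (sqrt (\<mu> u) * (f x \<bullet> u)) *\<^sub>R u)" by (simp add: Sx f_def)
    also have "\<dots> = (\<Sum>u\<in>U. (x \<bullet> u) *\<^sub>R (M *v u))"
      by (rule sum.cong) (auto simp: fu eig' mu0 real_sqrt_mult[symmetric])
    also have "\<dots> = M *v x" using mv_expand[OF U, of M x] by simp
    finally show ?thesis .
  qed
  then have "S ** S = M" by (simp add: matrix_eq matrix_vector_mul_assoc[symmetric])
  with psdS show ?thesis by blast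
qed

lemma sqrt_unique:
  fixes M :: "real^'n^'n"
  assumes M: "psd M" and S1: "psd S1" "S1 ** S1 = M" and S2: "psd S2" "S2 ** S2 = M"
  shows "S1 = S2"
proof -
  obtain U where U: "onb U" and eig: "\<And>u. u \<in> U \<Longrightarrow> M *v u = (u \<bullet> (M *v u)) *\<^sub>R u"
    using spectral[OF psd_sym[OF M]] by blast
  show ?thesis
  proof (rule matrix_eq_onb[OF U])
    fix u assume u: "u \<in> U"
    have mu: "0 \<le> u \<bullet> (M *v u)" using M by (simp add: psd_def)
    show "S1 *v u = S2 *v u"
      using root_on_eig[OF S1 eig[OF u] mu] root_on_eig[OF S2 eig[OF u] mu] by simp
  qed
qed

lemma mat_sqrt_eq: "psd M \<Longrightarrow> psd S \<Longrightarrow> S ** S = M \<Longrightarrow> mat_sqrt M = S"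
  unfolding mat_sqrt_def by (rule the1_equality) (use sqrt_unique in blast)+

lemma mat_sqrt_props:
  assumes "psd M" shows "psd (mat_sqrt M)" "mat_sqrt M ** mat_sqrt M = M"
  using sqrt_exists[OF assms] mat_sqrt_eq[OF assms] by auto

lemma mat_sqrt_eig:
  assumes "psd M" "M *v x = \<mu> *\<^sub>R x" "0 \<le> \<mu>"
  shows "mat_sqrt M *v x = sqrt \<mu> *\<^sub>R x"
  using root_on_eig[OF mat_sqrt_props[OF assms(1)] assms(2,3)] .

lemma trace_onb:
  fixes P :: "real^'n^'n"
  assumes U: "onb U"
  shows "trace P = (\<Sum>u\<in>U. u \<bullet> (P *v u))"
proof -
  have "u \<bullet> (P *v u) = (\<Sum>i\<in>UNIV. (P$i \<bullet> u) * (axis i 1 \<bullet> u))" for u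
    unfolding inner_vec_def[of u "P *v u"]
    by (simp only: matrix_vector_mul_component inner_axis' inner_real_def mult_1_left mult.commute)
  then have "(\<Sum>u\<in>U. u \<bullet> (P *v u)) = (\<Sum>u\<in>U. \<Sum>i\<in>UNIV. (P$i \<bullet> u) * (axis i 1 \<bullet> u))"
    by simp
  also have "\<dots> = (\<Sum>i\<in>UNIV. \<Sum>u\<in>U. (P$i \<bullet> u) * (axis i 1 \<bullet> u))" by (rule sum.swap)
  also have "\<dots> = (\<Sum>i\<in>UNIV. P$i \<bullet> axis i 1)" by (simp add: onb_parseval[OF U])
  also have "\<dots> = trace P" by (simp add: trace_def inner_axis)
  finally show ?thesis by simp
qed

lemma psd_AAt: "psd ((A::real^'k^'m) ** transpose A)"
  unfolding psd_def
  by (simp add: matrix_transpose_mul matrix_vector_mul_assoc[symmetric] inner_mv[of _ A])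

lemma inner_AAt: "x \<bullet> (((A::real^'k^'m) ** transpose A) *v x) = (transpose A *v x) \<bullet> (transpose A *v x)"
  by (simp add: matrix_vector_mul_assoc[symmetric] inner_mv[of _ A])



lemma mult_WWt_bal:
  fixes A :: "real^'k^'m" and B :: "real^'k^'n"
  assumes bal: "transpose A ** A = transpose B ** B"
  shows "(A ** transpose B) ** transpose (A ** transpose B) = (A ** transpose A) ** (A ** transpose A)"
proof -
  have "(A ** transpose B) ** transpose (A ** transpose B) = A ** ((transpose B ** B) ** transpose A)"
    by (simp add: matrix_transpose_mul matrix_mul_assoc)
  also have "\<dots> = (A ** transpose A) ** (A ** transpose A)"
    by (simp add: bal[symmetric] matrix_mul_assoc)
  finally show ?thesis .
qed

lemma frob_bal:
  fixes A :: "real^'k^'m" and B :: "real^'k^'n"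
  assumes bal: "transpose A ** A = transpose B ** B"
  shows "frob_sq A = frob_sq B"
  using trace_AtA[of A] trace_AtA[of B] bal by simp

lemma nuc_bal:
  fixes A :: "real^'k^'m" and B :: "real^'k^'n"
  assumes bal: "transpose A ** A = transpose B ** B"
  shows "nuclear_norm (A ** transpose B) = frob_sq A"
proof -
  have "mat_sqrt ((A ** transpose B) ** transpose (A ** transpose B)) = A ** transpose A"
    unfolding mult_WWt_bal[OF bal]
  proof (rule mat_sqrt_eq)
    show "psd ((A ** transpose A) ** (A ** transpose A))"
      using psd_AAt[of "A ** transpose A"] by (simp add: matrix_transpose_mul)
  qed (simp_all add: psd_AAt)
  then show ?thesis by (simp add: nuclear_norm_def trace_AAt)
qed

lemma svd_data:
  fixes W :: "real^'n^'m"
  obtains U where "onb U"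
    "\<And>u. u \<in> U \<Longrightarrow> (W ** transpose W) *v u = ((transpose W *v u) \<bullet> (transpose W *v u)) *\<^sub>R u"
proof -
  have "transpose (W ** transpose W) = W ** transpose W" by (simp add: matrix_transpose_mul)
  from spectral[OF this] obtain U where "onb U"
    "\<And>u. u \<in> U \<Longrightarrow> (W ** transpose W) *v u = (u \<bullet> ((W ** transpose W) *v u)) *\<^sub>R u" by blast
  then show ?thesis using that by (simp add: inner_AAt)
qed

lemma svd_orth:
  fixes W :: "real^'n^'m"
  assumes U: "onb U"
    and eig: "\<And>u. u \<in> U \<Longrightarrow> (W ** transpose W) *v u = ((transpose W *v u) \<bullet> (transpose W *v u)) *\<^sub>R u"
    and u: "u \<in> U" "u' \<in> U" "u \<noteq> u'"
  shows "(transpose W *v u) \<bullet> (transpose W *v u') = 0"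
proof -
  have "(transpose W *v u) \<bullet> (transpose W *v u') = u \<bullet> ((W ** transpose W) *v u')"
    by (simp add: matrix_vector_mul_assoc[symmetric] inner_mv[of u W])
  also have "\<dots> = 0" using eig[OF u(2)] onb_inner[OF U u(1,2)] u(3) by simp
  finally show ?thesis .
qed

lemma nuc_svd:
  fixes W :: "real^'n^'m"
  assumes U: "onb U"
    and eig: "\<And>u. u \<in> U \<Longrightarrow> (W ** transpose W) *v u = ((transpose W *v u) \<bullet> (transpose W *v u)) *\<^sub>R u"
  shows "nuclear_norm W = (\<Sum>u\<in>U. norm (transpose W *v u))"
proof -
  have "nuclear_norm W = (\<Sum>u\<in>U. u \<bullet> (mat_sqrt (W ** transpose W) *v u))"
    by (simp add: nuclear_norm_def trace_onb[OF U])
  also have "\<dots> = (\<Sum>u\<in>U. norm (transpose W *v u))"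
  proof (rule sum.cong)
    fix u assume u: "u \<in> U"
    have "mat_sqrt (W ** transpose W) *v u = sqrt ((transpose W *v u) \<bullet> (transpose W *v u)) *\<^sub>R u"
      by (rule mat_sqrt_eig[OF psd_AAt eig[OF u]]) simp
    moreover have "u \<bullet> u = 1" using onb_inner[OF U u u] by simp
    ultimately show "u \<bullet> (mat_sqrt (W ** transpose W) *v u) = norm (transpose W *v u)"
      by (simp add: norm_eq_sqrt_inner)
  qed simp
  finally show ?thesis .
qed

lemma bessel:
  fixes v :: "'a \<Rightarrow> 'b::real_inner"
  assumes fin: "finite S"
    and orth: "\<And>u u'. u \<in> S \<Longrightarrow> u' \<in> S \<Longrightarrow> u \<noteq> u' \<Longrightarrow> v u \<bullet> v u' = 0"
    and un: "\<And>u. u \<in> S \<Longrightarrow> v u \<bullet> v u = 1 \<or> v u = 0"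
  shows "(\<Sum>u\<in>S. (v u \<bullet> y)^2) \<le> y \<bullet> y"
proof -
  define z where "z = (\<Sum>u\<in>S. (v u \<bullet> y) *\<^sub>R v u)"
  have zv: "z \<bullet> v u' = v u' \<bullet> y" if u': "u' \<in> S" for u'
  proof -
    have "z \<bullet> v u' = (\<Sum>u\<in>S. (v u \<bullet> y) * (v u \<bullet> v u'))" by (simp add: z_def inner_sum_left)
    also have "\<dots> = (\<Sum>u\<in>S. if u = u' then (v u' \<bullet> y) else 0)"
    proof (rule sum.cong)
      fix u assume u: "u \<in> S"
      show "(v u \<bullet> y) * (v u \<bullet> v u') = (if u = u' then (v u' \<bullet> y) else 0)"
        using orth[OF u u'] un[OF u'] by auto
    qed simp
    also have "\<dots> = v u' \<bullet> y" using fin u' by simp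
    finally show ?thesis .
  qed
  have zy: "z \<bullet> y = (\<Sum>u\<in>S. (v u \<bullet> y)^2)" by (simp add: z_def inner_sum_left power2_eq_square)
  have zz: "z \<bullet> z = (\<Sum>u\<in>S. (v u \<bullet> y)^2)"
    by (subst (2) z_def) (simp add: inner_sum_right zv power2_eq_square)
  have "0 \<le> (y - z) \<bullet> (y - z)" by simp
  then show ?thesis using zy zz by (simp add: inner_diff_left inner_diff_right inner_commute[of y z])
qed

lemma frob_cols: "frob_sq (B::real^'k^'n) = (\<Sum>j\<in>UNIV. (\<chi> i. B$i$j) \<bullet> (\<chi> i. B$i$j))"
  by (simp add: frob_sq_def inner_vec_def power2_eq_square) (rule sum.swap)

lemma sum_sq_Bt:
  fixes B :: "real^'k^'n"
  assumes fin: "finite S"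
    and orth: "\<And>u u'. u \<in> S \<Longrightarrow> u' \<in> S \<Longrightarrow> u \<noteq> u' \<Longrightarrow> v u \<bullet> v u' = 0"
    and un: "\<And>u. u \<in> S \<Longrightarrow> v u \<bullet> v u = 1 \<or> v u = 0"
  shows "(\<Sum>u\<in>S. (transpose B *v v u) \<bullet> (transpose B *v v u)) \<le> frob_sq B"
proof -
  have e: "(x v* B) $ j = x \<bullet> (\<chi> i. B$i$j)" for x j
    by (simp add: vector_matrix_mult_def inner_vec_def mult.commute)
  have "(\<Sum>u\<in>S. (transpose B *v v u) \<bullet> (transpose B *v v u))
      = (\<Sum>u\<in>S. \<Sum>j\<in>UNIV. (v u \<bullet> (\<chi> i. B$i$j))^2)"
    by (simp add: inner_vec_def[of "_ v* B"] e power2_eq_square)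
  also have "\<dots> = (\<Sum>j\<in>UNIV. \<Sum>u\<in>S. (v u \<bullet> (\<chi> i. B$i$j))^2)" by (rule sum.swap)
  also have "\<dots> \<le> (\<Sum>j\<in>UNIV. (\<chi> i. B$i$j) \<bullet> (\<chi> i. B$i$j))"
    by (rule sum_mono) (rule bessel[OF fin orth un])
  also have "\<dots> = frob_sq B" by (simp add: frob_cols)
  finally show ?thesis .
qed

lemma nuc_le:
  fixes A :: "real^'k^'m" and B :: "real^'k^'n"
  shows "nuclear_norm (A ** transpose B) \<le> (frob_sq A + frob_sq B) / 2"
proof -
  define W where "W = A ** transpose B"
  obtain U where U: "onb U"
    and eig: "\<And>u. u \<in> U \<Longrightarrow> (W ** transpose W) *v u = ((transpose W *v u) \<bullet> (transpose W *v u)) *\<^sub>R u"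
    using svd_data by blast
  have finU: "finite U" using U by (simp add: onb_def)
  define v where "v u = (1 / norm (transpose W *v u)) *\<^sub>R (transpose W *v u)" for u
  have WtB: "transpose W = B ** transpose A" by (simp add: W_def matrix_transpose_mul)
  have pt: "norm (transpose W *v u) \<le> ((transpose A *v u) \<bullet> (transpose A *v u)
        + (transpose B *v v u) \<bullet> (transpose B *v v u)) / 2" for u
  proof -
    have "norm (transpose W *v u) = (transpose W *v u) \<bullet> v u"
      by (cases "transpose W *v u = 0") (simp_all add: v_def power2_norm_eq_inner[symmetric] power2_eq_square)
    also have "\<dots> = (transpose A *v u) \<bullet> (transpose B *v v u)"
      by (simp add: WtB matrix_vector_mul_assoc[symmetric] inner_mv[of _ B] inner_commute)
    also have "\<dots> \<le> norm (transpose A *v u) * norm (transpose B *v v u)"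
      by (rule Cauchy_Schwarz_ineq2[THEN abs_le_D1])
    also have "\<dots> \<le> ((norm (transpose A *v u))^2 + (norm (transpose B *v v u))^2) / 2"
      using sum_squares_bound[of "norm (transpose A *v u)" "norm (transpose B *v v u)"]
      by (simp add: field_simps power2_eq_square)
    finally show ?thesis by (simp add: power2_norm_eq_inner)
  qed
  have "nuclear_norm W = (\<Sum>u\<in>U. norm (transpose W *v u))" by (rule nuc_svd[OF U eig])
  also have "\<dots> \<le> (\<Sum>u\<in>U. ((transpose A *v u) \<bullet> (transpose A *v u)
        + (transpose B *v v u) \<bullet> (transpose B *v v u)) / 2)"
    by (rule sum_mono) (rule pt)
  also have "\<dots> = ((\<Sum>u\<in>U. u \<bullet> ((A ** transpose A) *v u))
        + (\<Sum>u\<in>U. (transpose B *v v u) \<bullet> (transpose B *v v u))) / 2"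
    by (simp add: sum_divide_distrib[symmetric] sum.distrib inner_AAt)
  also have "\<dots> \<le> (frob_sq A + frob_sq B) / 2"
  proof -
    have "(\<Sum>u\<in>U. u \<bullet> ((A ** transpose A) *v u)) = frob_sq A"
      by (simp add: trace_onb[OF U, symmetric] trace_AAt)
    moreover have "(\<Sum>u\<in>U. (transpose B *v v u) \<bullet> (transpose B *v v u)) \<le> frob_sq B"
    proof (rule sum_sq_Bt[OF finU])
      fix u u' assume "u \<in> U" "u' \<in> U" "u \<noteq> u'"
      then show "v u \<bullet> v u' = 0" using svd_orth[OF U eig] by (simp add: v_def)
    next
      fix u show "v u \<bullet> v u = 1 \<or> v u = 0"
        by (cases "transpose W *v u = 0")
           (simp_all add: v_def power2_norm_eq_inner[symmetric] power2_eq_square)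
    qed
    ultimately show ?thesis by simp
  qed
  finally show ?thesis by (simp add: W_def)
qed



lemma sum_if_image:
  fixes \<phi> :: "'a \<Rightarrow> 'r::finite"
  assumes inj: "inj_on \<phi> S" and fin: "finite S"
  shows "(\<Sum>k\<in>UNIV. if k \<in> \<phi> ` S then F (inv_into S \<phi> k) else 0) = (\<Sum>u\<in>S. F u)"
proof -
  have "(\<Sum>k\<in>UNIV. if k \<in> \<phi> ` S then F (inv_into S \<phi> k) else 0) = (\<Sum>k\<in>\<phi> ` S. F (inv_into S \<phi> k))"
    using sum.inter_restrict[of UNIV "\<lambda>k. F (inv_into S \<phi> k)" "\<phi> ` S"] by simp
  also have "\<dots> = (\<Sum>u\<in>S. F (inv_into S \<phi> (\<phi> u)))" by (simp add: sum.reindex[OF inj])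
  also have "\<dots> = (\<Sum>u\<in>S. F u)" using inj by (simp add: inv_into_f_f)
  finally show ?thesis .
qed

definition Mk :: "('a \<Rightarrow> 'r::finite) \<Rightarrow> 'a set \<Rightarrow> ('a \<Rightarrow> real) \<Rightarrow> ('a \<Rightarrow> real^'m) \<Rightarrow> real^'r^'m" where
  "Mk \<phi> S q g = (\<chi> i k. if k \<in> \<phi> ` S then q (inv_into S \<phi> k) * g (inv_into S \<phi> k) $ i else 0)"

lemma mk_prod:
  fixes \<phi> :: "'a \<Rightarrow> 'r::finite"
  assumes inj: "inj_on \<phi> S" and fin: "finite S"
  shows "Mk \<phi> S q g ** transpose (Mk \<phi> S q h) = (\<chi> i j. \<Sum>u\<in>S. q u * q u * (g u $ i * h u $ j))"
proof -
  have "(Mk \<phi> S q g ** transpose (Mk \<phi> S q h)) $ i $ j = (\<Sum>u\<in>S. q u * q u * (g u $ i * h u $ j))" for i j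
  proof -
    have "(Mk \<phi> S q g ** transpose (Mk \<phi> S q h)) $ i $ j
        = (\<Sum>k\<in>UNIV. if k \<in> \<phi> ` S then (\<lambda>u. q u * q u * (g u $ i * h u $ j)) (inv_into S \<phi> k) else 0)"
      unfolding Mk_def matrix_matrix_mult_def transpose_def by (auto intro!: sum.cong)
    then show ?thesis using sum_if_image[OF inj fin, of "\<lambda>u. q u * q u * (g u $ i * h u $ j)"] by simp
  qed
  then show ?thesis by (simp add: vec_eq_iff)
qed

lemma mk_gram:
  fixes \<phi> :: "'a \<Rightarrow> 'r::finite"
  assumes inj: "inj_on \<phi> S"
    and on: "\<And>u u'. u \<in> S \<Longrightarrow> u' \<in> S \<Longrightarrow> g u \<bullet> g u' = (if u = u' then 1 else 0)"
  shows "transpose (Mk \<phi> S q g) ** Mk \<phi> S q g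
     = (\<chi> k l. if k = l \<and> k \<in> \<phi> ` S then q (inv_into S \<phi> k) * q (inv_into S \<phi> k) else 0)"
proof -
  have "(transpose (Mk \<phi> S q g) ** Mk \<phi> S q g) $ k $ l
     = (if k = l \<and> k \<in> \<phi> ` S then q (inv_into S \<phi> k) * q (inv_into S \<phi> k) else 0)" for k l
  proof (cases "k \<in> \<phi> ` S \<and> l \<in> \<phi> ` S")
    case True
    then have in1: "inv_into S \<phi> k \<in> S" "inv_into S \<phi> l \<in> S" by (auto intro: inv_into_into)
    have eqv: "inv_into S \<phi> k = inv_into S \<phi> l \<longleftrightarrow> k = l"
      using True by (metis f_inv_into_f)
    have "(transpose (Mk \<phi> S q g) ** Mk \<phi> S q g) $ k $ l
        = q (inv_into S \<phi> k) * q (inv_into S \<phi> l) * (g (inv_into S \<phi> k) \<bullet> g (inv_into S \<phi> l))"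
      using True by (simp add: Mk_def matrix_matrix_mult_def transpose_def inner_vec_def sum_distrib_left mult_ac)
    also have "\<dots> = (if k = l \<and> k \<in> \<phi> ` S then q (inv_into S \<phi> k) * q (inv_into S \<phi> k) else 0)"
      using on[OF in1] eqv True by auto
    finally show ?thesis .
  next
    case False
    then show ?thesis by (auto simp: Mk_def matrix_matrix_mult_def transpose_def)
  qed
  then show ?thesis by (simp add: vec_eq_iff)
qed

lemma bal_exists:
  fixes W :: "real^'n^'m"
  assumes rk: "rank W \<le> CARD('r)"
  shows "\<exists>(A::real^'r^'m) (B::real^'r^'n). A ** transpose B = W \<and> transpose A ** A = transpose B ** B"
proof -
  obtain U where U: "onb U"
    and eig: "\<And>u. u \<in> U \<Longrightarrow> (W ** transpose W) *v u = ((transpose W *v u) \<bullet> (transpose W *v u)) *\<^sub>R u"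
    using svd_data by blast
  have finU: "finite U" using U by (simp add: onb_def)
  define S where "S = {u\<in>U. transpose W *v u \<noteq> 0}"
  have finS: "finite S" and SU: "S \<subseteq> U" using finU by (auto simp: S_def)
  define \<sigma> where "\<sigma> u = norm (transpose W *v u)" for u
  define v where "v u = (1 / \<sigma> u) *\<^sub>R (transpose W *v u)" for u
  have von: "v u \<bullet> v u' = (if u = u' then 1 else 0)" if "u \<in> S" "u' \<in> S" for u u'
  proof (cases "u = u'")
    case True
    then show ?thesis using that
      by (simp add: S_def v_def \<sigma>_def power2_norm_eq_inner[symmetric] power2_eq_square)
  next
    case False
    then show ?thesis using that svd_orth[OF U eig, of u u'] by (simp add: S_def v_def)
  qed
  have uon: "u \<bullet> u' = (if u = u' then 1 else 0)" if "u \<in> S" "u' \<in> S" for u u'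
    using onb_inner[OF U] that SU by blast
  have injv: "inj_on v S"
  proof (rule inj_onI)
    fix u u' assume "u \<in> S" "u' \<in> S" "v u = v u'"
    then show "u = u'" using von[of u u'] von[of u' u'] by (metis zero_neq_one)
  qed
  have "card S \<le> CARD('r)"
  proof -
    have "card S = card (v ` S)" using injv by (simp add: card_image)
    also have "\<dots> \<le> dim (range (\<lambda>x. transpose W *v x))"
    proof (rule independent_card_le_dim)
      show "v ` S \<subseteq> range (\<lambda>x. transpose W *v x)"
      proof
        fix y assume "y \<in> v ` S"
        then obtain u where "y = v u" by auto
        then have "y = transpose W *v ((1 / \<sigma> u) *\<^sub>R u)"
          by (simp only: v_def matrix_vector_mult_scaleR)
        then show "y \<in> range (\<lambda>x. transpose W *v x)" by blast
      qed
      show "independent (v ` S)"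
      proof (rule pairwise_orthogonal_independent)
        show "pairwise orthogonal (v ` S)"
          using von by (auto simp: pairwise_def orthogonal_def)
        show "0 \<notin> v ` S" using von by force
      qed
    qed
    also have "\<dots> = rank W" by (metis rank_dim_range rank_transpose)
    finally show ?thesis using rk by simp
  qed
  then obtain \<phi> :: "real^'m \<Rightarrow> 'r" where inj: "inj_on \<phi> S"
    using card_le_inj[OF finS, of "UNIV :: 'r set"] by auto
  define q where "q u = sqrt (\<sigma> u)" for u
  define A where "A = Mk \<phi> S q (\<lambda>u. u)"
  define B where "B = Mk \<phi> S q v"
  have "A ** transpose B = W"
  proof -
    have "(A ** transpose B) $ i $ j = W $ i $ j" for i j
    proof -
      have "(A ** transpose B) $ i $ j = (\<Sum>u\<in>S. q u * q u * (u $ i * v u $ j))"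
        by (simp add: A_def B_def mk_prod[OF inj finS])
      also have "\<dots> = (\<Sum>u\<in>S. u $ i * (transpose W *v u) $ j)"
        by (rule sum.cong) (auto simp: q_def v_def S_def \<sigma>_def)
      also have "\<dots> = (\<Sum>u\<in>U. u $ i * (transpose W *v u) $ j)"
        by (rule sum.mono_neutral_left[OF finU SU]) (auto simp: S_def)
      also have "\<dots> = (\<Sum>u\<in>U. (axis i 1 \<bullet> u) * ((\<chi> l. W$l$j) \<bullet> u))"
        by (simp add: inner_axis' inner_vec_def[of "(\<chi> l. W$l$j)"] vector_matrix_mult_def mult.commute)
      also have "\<dots> = W $ i $ j"
        using onb_parseval[OF U, of "axis i 1" "(\<chi> l. W$l$j)"] by (simp add: inner_axis')
      finally show ?thesis .
    qed
    then show ?thesis by (simp add: vec_eq_iff)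
  qed
  moreover have "transpose A ** A = transpose B ** B"
    unfolding A_def B_def using mk_gram[OF inj uon] mk_gram[OF inj von] by simp
  ultimately show ?thesis by blast
qed



lemma onb_extend:
  fixes B :: "'a::euclidean_space set"
  assumes orth: "pairwise orthogonal B" and nb: "\<And>b. b \<in> B \<Longrightarrow> norm b = 1"
  obtains B' where "B \<subseteq> B'" "onb B'"
proof -
  obtain C where CS: "C \<subseteq> orthogonal_comp (span B)" and Corth: "pairwise orthogonal C"
    and C1: "\<And>x. x \<in> C \<Longrightarrow> norm x = 1" and Ci: "independent C"
    and Csp: "span C = orthogonal_comp (span B)"
    using orthonormal_basis_subspace[OF subspace_orthogonal_comp[of "span B"]] by metis
  have finB: "finite B" using orth pairwise_orthogonal_imp_finite by blast
  have finC: "finite C" using Ci independent_imp_finite by blast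
  have BC: "orthogonal b c" if "b \<in> B" "c \<in> C" for b c
  proof -
    have "c \<in> orthogonal_comp (span B)" using CS that by blast
    then have "\<forall>y\<in>span B. orthogonal y c" by (simp add: orthogonal_comp_def)
    then show ?thesis using span_base that by blast
  qed
  have "onb (B \<union> C)"
    unfolding onb_def
  proof (intro conjI)
    show "finite (B \<union> C)" using finB finC by simp
    show "pairwise orthogonal (B \<union> C)"
      using orth Corth BC unfolding pairwise_def by (metis Un_iff orthogonal_commute)
    show "\<forall>u\<in>B \<union> C. norm u = 1" using nb C1 by auto
    show "span (B \<union> C) = UNIV"
    proof -
      have "x \<in> span (B \<union> C)" for x
      proof -
        have "x \<in> span B + orthogonal_comp (span B)"
          using subspace_sum_orthogonal_comp[of "span B"] by simp
        then obtain a b where ab: "a \<in> span B" "b \<in> orthogonal_comp (span B)" "x = a + b"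
          by (auto simp: set_plus_def)
        have "a \<in> span (B \<union> C)" using ab(1) by (meson span_mono sup_ge1 subsetD)
        moreover have "b \<in> span (B \<union> C)" using ab(2) Csp by (metis span_mono sup_ge2 subsetD)
        ultimately show ?thesis using ab(3) span_add by blast
      qed
      then show ?thesis by auto
    qed
  qed
  then show ?thesis using that by blast
qed

lemma onb_card: "onb (B::'a::euclidean_space set) \<Longrightarrow> card B = DIM('a)"
proof -
  assume B: "onb B"
  have "independent B"
    using B pairwise_orthogonal_independent[of B] by (force simp: onb_def)
  then show ?thesis using indep_card_eq_dim_span[of B] B unfolding onb_def by (metis dim_span dim_UNIV)
qed

lemma linear_polar:
  fixes h1 :: "'a::real_vector \<Rightarrow> 'b::real_inner" and h2 :: "'a \<Rightarrow> 'c::real_inner"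
  assumes l1: "linear h1" and l2: "linear h2" and nm: "\<And>z. norm (h1 z) = norm (h2 z)"
  shows "h1 z \<bullet> h1 z' = h2 z \<bullet> h2 z'"
proof -
  have sq: "h1 x \<bullet> h1 x = h2 x \<bullet> h2 x" for x using nm[of x] by (simp add: norm_eq)
  have "h1 (z + z') \<bullet> h1 (z + z') = h2 (z + z') \<bullet> h2 (z + z')" by (rule sq)
  then have "h1 z \<bullet> h1 z + 2 * (h1 z \<bullet> h1 z') + h1 z' \<bullet> h1 z' = h2 z \<bullet> h2 z + 2 * (h2 z \<bullet> h2 z') + h2 z' \<bullet> h2 z'"
    by (simp add: linear_add[OF l1] linear_add[OF l2] inner_add_left inner_add_right inner_commute)
  then show ?thesis using sq[of z] sq[of z'] by simp
qed

lemma iso_ext: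
  fixes h1 h2 :: "'a::euclidean_space \<Rightarrow> 'b::euclidean_space"
  assumes l1: "linear h1" and l2: "linear h2" and nm: "\<And>z. norm (h1 z) = norm (h2 z)"
  obtains g where "orthogonal_transformation g" "\<And>z. g (h1 z) = h2 z"
proof -
  have ip: "h1 z \<bullet> h1 z' = h2 z \<bullet> h2 z'" for z z' by (rule linear_polar[OF l1 l2 nm])
  have subS: "subspace (range h1)" by (rule linear_subspace_image[OF l1 subspace_UNIV])
  obtain B where BS: "B \<subseteq> range h1" and Borth: "pairwise orthogonal B"
    and B1: "\<And>x. x \<in> B \<Longrightarrow> norm x = 1" and Bi: "independent B" and Bsp: "span B = range h1"
    using orthonormal_basis_subspace[OF subS] by metis
  have finB: "finite B" using Bi independent_imp_finite by blast
  have Bon: "b \<bullet> b' = (if b = b' then 1 else 0)" if "b \<in> B" "b' \<in> B" for b b'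
    using Borth B1 that by (auto simp: pairwise_def orthogonal_def norm_eq_1)
  define zz where "zz b = (SOME z. h1 z = b)" for b
  have hz: "h1 (zz b) = b" if "b \<in> B" for b
    using BS that unfolding zz_def by (metis (mono_tags, lifting) rangeE someI_ex subsetD)
  define c where "c b = h2 (zz b)" for b
  have con: "c b \<bullet> c b' = (if b = b' then 1 else 0)" if "b \<in> B" "b' \<in> B" for b b'
    using ip[of "zz b" "zz b'"] hz that Bon by (simp add: c_def)
  have injc: "inj_on c B"
    by (rule inj_onI) (metis con zero_neq_one)
  define C where "C = c ` B"
  have Corth: "pairwise orthogonal C" and C1: "\<And>x. x \<in> C \<Longrightarrow> norm x = 1"
    using con by (auto simp: C_def pairwise_def orthogonal_def norm_eq_1)
  obtain B' where BB': "B \<subseteq> B'" and B': "onb B'" using onb_extend[OF Borth B1] by blast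
  obtain C' where CC': "C \<subseteq> C'" and C': "onb C'" using onb_extend[OF Corth C1] by blast
  have finB': "finite B'" and finC': "finite C'" using B' C' by (auto simp: onb_def)
  have cardC: "card C = card B" using injc by (simp add: C_def card_image)
  have "card (B' - B) = card (C' - C)"
    using onb_card[OF B'] onb_card[OF C'] BB' CC' cardC finB' finC'
    by (simp add: card_Diff_subset finite_subset)
  then obtain \<psi> where \<psi>: "bij_betw \<psi> (B' - B) (C' - C)"
    using bij_betw_iff_card[of "B' - B" "C' - C"] finB' finC' by auto
  define f where "f b = (if b \<in> B then c b else \<psi> b)" for b
  have fin: "f b \<in> C'" if "b \<in> B'" for b
    using that CC' \<psi> by (auto simp: f_def C_def bij_betw_def)
  have injf: "inj_on f B'"
  proof (rule inj_onI)
    fix x y assume xy: "x \<in> B'" "y \<in> B'" "f x = f y"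
    show "x = y"
    proof (cases "x \<in> B"; cases "y \<in> B")
      assume "x \<in> B" "y \<in> B" then show ?thesis using xy injc by (simp add: f_def inj_on_def)
    next
      assume "x \<in> B" "y \<notin> B"
      then have "f y \<in> C' - C" "f x \<in> C" using \<psi> xy by (auto simp: f_def C_def bij_betw_def)
      then show ?thesis using xy by simp
    next
      assume "x \<notin> B" "y \<in> B"
      then have "f x \<in> C' - C" "f y \<in> C" using \<psi> xy by (auto simp: f_def C_def bij_betw_def)
      then show ?thesis using xy by simp
    next
      assume "x \<notin> B" "y \<notin> B"
      then show ?thesis using xy \<psi> by (simp add: f_def bij_betw_def inj_on_def)
    qed
  qed
  have fon: "f b \<bullet> f b' = (if b = b' then 1 else 0)" if "b \<in> B'" "b' \<in> B'" for b b'
  proof -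
    have "f b \<in> C'" "f b' \<in> C'" using fin that by auto
    moreover have "f b = f b' \<longleftrightarrow> b = b'" using injf that by (auto simp: inj_on_def)
    ultimately show ?thesis using onb_inner[OF C'] by simp
  qed
  have Bi': "independent B'"
    using B' pairwise_orthogonal_independent[of B'] by (force simp: onb_def)
  obtain g where lg: "linear g" and gf: "\<And>x. x \<in> B' \<Longrightarrow> g x = f x"
    using linear_independent_extend[OF Bi', of f] by blast
  have gexp: "g v = (\<Sum>b\<in>B'. (v \<bullet> b) *\<^sub>R f b)" for v
  proof -
    have "g v = g (\<Sum>b\<in>B'. (v \<bullet> b) *\<^sub>R b)" using onb_expand[OF B'] by simp
    also have "\<dots> = (\<Sum>b\<in>B'. (v \<bullet> b) *\<^sub>R f b)"
      by (simp add: real_vector.linear_sum[OF lg] real_vector.linear_scale[OF lg] gf)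
    finally show ?thesis .
  qed
  have "orthogonal_transformation g"
    unfolding orthogonal_transformation
  proof (intro conjI allI lg)
    fix v
    have fg: "f b \<bullet> g v = v \<bullet> b" if "b \<in> B'" for b
    proof -
      have "f b \<bullet> g v = (\<Sum>b'\<in>B'. (v \<bullet> b') * (f b \<bullet> f b'))" by (simp add: gexp inner_sum_right)
      also have "\<dots> = (\<Sum>b'\<in>B'. if b' = b then v \<bullet> b else 0)"
        by (rule sum.cong) (auto simp: fon that)
      also have "\<dots> = v \<bullet> b" using that finB' by simp
      finally show ?thesis .
    qed
    have "g v \<bullet> g v = (\<Sum>b\<in>B'. (v \<bullet> b) * (v \<bullet> b))"
      by (subst (1) gexp) (simp add: inner_sum_left fg)
    also have "\<dots> = v \<bullet> v" by (rule onb_parseval[OF B'])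
    finally show "norm (g v) = norm v" by (simp add: norm_eq)
  qed
  moreover have "g (h1 z) = h2 z" for z
  proof -
    have hsp: "h1 z \<in> span B" using Bsp by auto
    have ex: "h1 z = (\<Sum>b\<in>B. (h1 z \<bullet> b) *\<^sub>R b)"
      using orthonormal_basis_expand[OF Borth B1 hsp finB] by simp
    define w where "w = (\<Sum>b\<in>B. (h1 z \<bullet> b) *\<^sub>R zz b)"
    have "h1 w = (\<Sum>b\<in>B. (h1 z \<bullet> b) *\<^sub>R b)"
      by (simp add: w_def real_vector.linear_sum[OF l1] real_vector.linear_scale[OF l1] hz)
    then have "h1 (z - w) = 0" using ex by (simp add: linear_diff[OF l1])
    then have "h2 (z - w) = 0" using nm[of "z - w"] by simp
    then have "h2 z = h2 w" by (simp add: linear_diff[OF l2])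
    also have "\<dots> = (\<Sum>b\<in>B. (h1 z \<bullet> b) *\<^sub>R c b)"
      by (simp add: w_def real_vector.linear_sum[OF l2] real_vector.linear_scale[OF l2] c_def)
    also have "\<dots> = g (h1 z)"
      by (subst ex) (simp add: real_vector.linear_sum[OF lg] real_vector.linear_scale[OF lg] gf f_def
          subsetD[OF BB'] cong: sum.cong)
    finally show ?thesis by simp
  qed
  ultimately show ?thesis using that by blast
qed



lemma mm_add_r: "((A::real^'n^'m) + B) ** C = A ** C + B ** C"
  by (simp add: matrix_matrix_mult_def vec_eq_iff sum.distrib distrib_right)
lemma mm_diff_r: "((A::real^'n^'m) - B) ** C = A ** C - B ** C"
  by (simp add: matrix_matrix_mult_def vec_eq_iff sum_subtractf left_diff_distrib)
lemma mm_diff_l: "(A::real^'n^'m) ** (B - C) = A ** B - A ** C"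
  by (simp add: matrix_matrix_mult_def vec_eq_iff sum_subtractf right_diff_distrib)
lemma mm_scale_l: "(t *\<^sub>R (A::real^'n^'m)) ** B = t *\<^sub>R (A ** B)"
  by (simp add: scalar_matrix_assoc)
lemma mm_scale_r: "(A::real^'n^'m) ** (t *\<^sub>R B) = t *\<^sub>R (A ** B)"
  by (simp add: matrix_scalar_ac scalar_matrix_assoc)
lemma tr_add: "transpose ((A::real^'n^'m) + B) = transpose A + transpose B"
  by (simp add: transpose_def vec_eq_iff)
lemma tr_diff: "transpose ((A::real^'n^'m) - B) = transpose A - transpose B"
  by (simp add: transpose_def vec_eq_iff)

lemma tendsto_mm:
  fixes f :: "'a \<Rightarrow> real^'n^'m" and g :: "'a \<Rightarrow> real^'p^'n"
  assumes "(f \<longlongrightarrow> a) F" "(g \<longlongrightarrow> b) F"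
  shows "((\<lambda>x. f x ** g x) \<longlongrightarrow> a ** b) F"
proof (rule vec_tendstoI)
  fix i
  show "((\<lambda>x. (f x ** g x) $ i) \<longlongrightarrow> (a ** b) $ i) F"
  proof (rule vec_tendstoI)
    fix j
    have fi: "((\<lambda>x. f x $ i $ k) \<longlongrightarrow> a $ i $ k) F" for k
      by (intro tendsto_vec_nth assms)
    have gj: "((\<lambda>x. g x $ k $ j) \<longlongrightarrow> b $ k $ j) F" for k
      by (intro tendsto_vec_nth assms)
    show "((\<lambda>x. (f x ** g x) $ i $ j) \<longlongrightarrow> (a ** b) $ i $ j) F"
      unfolding matrix_matrix_mult_def by (simp, intro tendsto_sum tendsto_mult fi gj)
  qed
qed

lemma tendsto_tr:
  fixes f :: "'a \<Rightarrow> real^'n^'m"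
  assumes "(f \<longlongrightarrow> a) F"
  shows "((\<lambda>x. transpose (f x)) \<longlongrightarrow> transpose a) F"
proof (rule vec_tendstoI)
  fix i
  show "((\<lambda>x. transpose (f x) $ i) \<longlongrightarrow> transpose a $ i) F"
  proof (rule vec_tendstoI)
    fix j
    show "((\<lambda>x. transpose (f x) $ i $ j) \<longlongrightarrow> transpose a $ i $ j) F"
      unfolding transpose_def by (simp, intro tendsto_vec_nth assms)
  qed
qed

lemma sqrt_bal:
  fixes A :: "real^'k^'m" and B :: "real^'k^'n"
  assumes bal: "transpose A ** A = transpose B ** B"
  shows "mat_sqrt ((A ** transpose B) ** transpose (A ** transpose B)) = A ** transpose A"
  unfolding mult_WWt_bal[OF bal]
proof (rule mat_sqrt_eq)
  show "psd ((A ** transpose A) ** (A ** transpose A))"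
    using psd_AAt[of "A ** transpose A"] by (simp add: matrix_transpose_mul)
qed (simp_all add: psd_AAt)

lemma h_inner:
  fixes A :: "real^'k^'m" and B :: "real^'k^'n"
  shows "(transpose A *v x + transpose B *v y) \<bullet> (transpose A *v x + transpose B *v y)
    = x \<bullet> ((A ** transpose A) *v x) + 2 * (x \<bullet> ((A ** transpose B) *v y)) + y \<bullet> ((B ** transpose B) *v y)"
proof -
  have "(transpose A *v x) \<bullet> (transpose B *v y) = x \<bullet> ((A ** transpose B) *v y)"
    by (simp add: matrix_vector_mul_assoc[symmetric] inner_mv[of x A])
  then show ?thesis using inner_commute[of "transpose B *v y" "transpose A *v x"]
    by (simp add: inner_AAt inner_add_left inner_add_right)
qed

lemma bal_unique:
  fixes A A2 :: "real^'r^'m" and B B2 :: "real^'r^'n"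
  assumes b1: "transpose A ** A = transpose B ** B" and b2: "transpose A2 ** A2 = transpose B2 ** B2"
    and eq: "A ** transpose B = A2 ** transpose B2"
  obtains Q where "orthogonal_matrix Q" "A2 = A ** Q" "B2 = B ** Q"
proof -
  have PA: "A ** transpose A = A2 ** transpose A2"
    using sqrt_bal[OF b1] sqrt_bal[OF b2] eq by simp
  have eqt: "B ** transpose A = B2 ** transpose A2"
    using arg_cong[OF eq, of transpose] by (simp add: matrix_transpose_mul)
  have PB: "B ** transpose B = B2 ** transpose B2"
    using sqrt_bal[OF b1[symmetric]] sqrt_bal[OF b2[symmetric]] eqt by simp
  define h1 where "h1 p = transpose A *v fst p + transpose B *v snd p" for p :: "(real^'m) \<times> (real^'n)"
  define h2 where "h2 p = transpose A2 *v fst p + transpose B2 *v snd p" for p :: "(real^'m) \<times> (real^'n)"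
  have l1: "linear h1" by (rule linearI) (simp_all add: h1_def matrix_vector_right_distrib matrix_vector_mult_scaleR scaleR_add_right)
  have l2: "linear h2" by (rule linearI) (simp_all add: h2_def matrix_vector_right_distrib matrix_vector_mult_scaleR scaleR_add_right)
  have nm: "norm (h1 p) = norm (h2 p)" for p
  proof -
    have "h1 p \<bullet> h1 p = h2 p \<bullet> h2 p"
      unfolding h1_def h2_def h_inner PA PB eq ..
    then show ?thesis by (simp add: norm_eq)
  qed
  obtain g where og: "orthogonal_transformation g" and gh: "\<And>p. g (h1 p) = h2 p"
    using iso_ext[OF l1 l2 nm] by blast
  define Q0 where "Q0 = matrix g"
  have lg: "linear g" using og by (simp add: orthogonal_transformation)
  have gQ: "g v = Q0 *v v" for v using lg by (simp add: Q0_def fun_eq_iff)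
  have oQ: "orthogonal_matrix Q0" using og by (simp add: orthogonal_transformation_matrix Q0_def)
  have "Q0 ** transpose A = transpose A2"
  proof -
    have "(Q0 ** transpose A) *v x = transpose A2 *v x" for x
      using gh[of "(x, 0)"] by (simp add: h1_def h2_def gQ matrix_vector_mul_assoc[symmetric])
    then show ?thesis by (simp add: matrix_eq)
  qed
  then have "A2 = A ** transpose Q0" by (metis matrix_transpose_mul transpose_transpose)
  moreover have "Q0 ** transpose B = transpose B2"
  proof -
    have "(Q0 ** transpose B) *v y = transpose B2 *v y" for y
      using gh[of "(0, y)"] by (simp add: h1_def h2_def gQ matrix_vector_mul_assoc[symmetric])
    then show ?thesis by (simp add: matrix_eq)
  qed
  then have "B2 = B ** transpose Q0" by (metis matrix_transpose_mul transpose_transpose)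
  moreover have "orthogonal_matrix (transpose Q0)" using oQ by simp
  ultimately show ?thesis using that by blast
qed



lemma min_path:
  fixes f :: "'a::topological_space \<Rightarrow> real" and p :: "real \<Rightarrow> 'a"
  assumes lm: "local_min_on f UNIV x0" and p0: "p 0 = x0" and lim: "(p \<longlongrightarrow> x0) (at 0)"
  shows "\<exists>d>0. \<forall>t. \<bar>t\<bar> < d \<longrightarrow> f x0 \<le> f (p t)"
proof -
  obtain U where U: "open U" "x0 \<in> U" and mn: "\<And>y. y \<in> U \<Longrightarrow> f x0 \<le> f y"
    using lm by (auto simp: local_min_on_def)
  have "eventually (\<lambda>t. p t \<in> U) (at 0)" using topological_tendstoD[OF lim U(1,2)] .
  then obtain d where d: "d > 0" "\<And>t. t \<noteq> 0 \<Longrightarrow> dist t 0 < d \<Longrightarrow> p t \<in> U"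
    by (auto simp: eventually_at)
  have "f x0 \<le> f (p t)" if "\<bar>t\<bar> < d" for t
  proof (cases "t = 0")
    case True then show ?thesis by (simp add: p0)
  next
    case False then show ?thesis using d that mn by simp
  qed
  with d show ?thesis by blast
qed

lemma path_lemma:
  fixes A :: "real^'r^'m" and B :: "real^'r^'n" and C :: "real^'r^'m" and D :: "real^'r^'n"
  assumes lm: "local_min_on (L_L2 L lam) UNIV (A, B)" and lam: "lam > 0"
    and prod: "\<And>t. \<bar>t\<bar> < 1/2 \<Longrightarrow> (A + a t *\<^sub>R C) ** transpose (B + b t *\<^sub>R D) = A ** transpose B"
    and a0: "a 0 = 0" and b0: "b 0 = 0"
    and da: "(a has_real_derivative 1) (at 0)" and db: "(b has_real_derivative -1) (at 0)"
  shows "A \<bullet> C = B \<bullet> D"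
proof -
  define p where "p t = (A + a t *\<^sub>R C, B + b t *\<^sub>R D)" for t
  have ca: "(a \<longlongrightarrow> 0) (at 0)" using DERIV_isCont[OF da] a0 by (simp add: isCont_def)
  have cb: "(b \<longlongrightarrow> 0) (at 0)" using DERIV_isCont[OF db] b0 by (simp add: isCont_def)
  have "(p \<longlongrightarrow> (A + 0 *\<^sub>R C, B + 0 *\<^sub>R D)) (at 0)"
    unfolding p_def by (intro tendsto_intros ca cb)
  then have lim: "(p \<longlongrightarrow> (A, B)) (at 0)" by simp
  obtain d where d: "d > 0" and dm: "\<And>t. \<bar>t\<bar> < d \<Longrightarrow> L_L2 L lam (A, B) \<le> L_L2 L lam (p t)"
    using min_path[OF lm _ lim] a0 b0 by (auto simp: p_def)
  define g where "g t = A \<bullet> A + 2 * a t * (A \<bullet> C) + (a t)^2 * (C \<bullet> C)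
     + (B \<bullet> B + 2 * b t * (B \<bullet> D) + (b t)^2 * (D \<bullet> D))" for t
  have gi: "(A + a t *\<^sub>R C) \<bullet> (A + a t *\<^sub>R C) + (B + b t *\<^sub>R D) \<bullet> (B + b t *\<^sub>R D) = g t" for t
    by (simp add: g_def inner_add_left inner_add_right inner_commute[of C A] inner_commute[of D B]
        power2_eq_square algebra_simps)
  have LL: "L_L2 L lam (p t) = L (A ** transpose B) + lam / 2 * g t" if "\<bar>t\<bar> < 1/2" for t
    using prod[OF that] by (simp add: L_L2_def p_def frob_inner gi)
  have g0: "g 0 = A \<bullet> A + B \<bullet> B" by (simp add: g_def a0 b0)
  have LL0: "L_L2 L lam (A, B) = L (A ** transpose B) + lam / 2 * g 0"
    by (simp add: L_L2_def frob_inner g0)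
  have gmin: "\<forall>y. \<bar>0 - y\<bar> < min d (1/2) \<longrightarrow> g 0 \<le> g y"
  proof (intro allI impI)
    fix y assume "\<bar>0 - y\<bar> < min d (1/2)"
    then have y: "\<bar>y\<bar> < d" "\<bar>y\<bar> < 1/2" by auto
    have "L (A ** transpose B) + lam / 2 * g 0 \<le> L (A ** transpose B) + lam / 2 * g y"
      using dm[OF y(1)] LL[OF y(2)] LL0 by simp
    then show "g 0 \<le> g y" using lam by simp
  qed
  have "(g has_real_derivative (2 * 1 * (A \<bullet> C) + 2 * (a 0) * 1 * (C \<bullet> C)
      + (2 * (-1) * (B \<bullet> D) + 2 * (b 0) * (-1) * (D \<bullet> D)))) (at 0)"
    unfolding g_def
    by (rule derivative_eq_intros da db refl | simp)+
  then have "(g has_real_derivative (2 * (A \<bullet> C) - 2 * (B \<bullet> D))) (at 0)"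
    by (simp add: a0 b0)
  from DERIV_local_min[OF this _ gmin] d show ?thesis by simp
qed

definition Eij :: "'r::finite \<Rightarrow> 'r \<Rightarrow> real^'r^'r" where
  "Eij i j = (\<chi> a b. if a = i \<and> b = j then 1 else 0)"

lemma inner_AE: "(A::real^'r^'m) \<bullet> (A ** Eij i j) = (transpose A ** A) $ j $ i"
proof -
  have "(A ** Eij i j) $ x $ y = (if y = j then A $ x $ i else 0)" for x y
    by (simp add: matrix_matrix_mult_def Eij_def if_distrib[of "\<lambda>z. _ * z"] cong: if_cong)
  then show ?thesis
    by (simp add: inner_vec_def matrix_matrix_mult_def transpose_def if_distrib[of "\<lambda>z. _ * z"] mult.commute
        cong: if_cong)
qed

lemma tr_E: "transpose (Eij i j) = Eij j i"
  by (simp add: transpose_def Eij_def vec_eq_iff conj_commute)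

lemma EE: "Eij i j ** Eij i j = (if i = j then Eij i j else 0)"
  by (auto simp: matrix_matrix_mult_def Eij_def vec_eq_iff if_distrib[of "\<lambda>z. _ * z"] cong: if_cong)

lemma gram_sym: "(transpose (B::real^'r^'n) ** B) $ i $ j = (transpose B ** B) $ j $ i"
  by (simp add: matrix_matrix_mult_def transpose_def) (rule sum.cong, simp_all add: mult.commute)

lemma balanced_of_min:
  fixes A :: "real^'r^'m" and B :: "real^'r^'n"
  assumes lm: "local_min_on (L_L2 L lam) UNIV (A, B)" and lam: "lam > 0"
  shows "transpose A ** A = transpose B ** B"
proof -
  have "(transpose A ** A) $ j $ i = (transpose B ** B) $ j $ i" for i j
  proof (cases "i = j")
    case False
    let ?X = "Eij i j"
    have XX: "?X ** ?X = 0" using EE[of i j] False by simp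
    have "A \<bullet> (A ** ?X) = B \<bullet> (B ** transpose ?X)"
    proof (rule path_lemma[OF lm lam, where a = "\<lambda>t. t" and b = "\<lambda>t. - t"])
      fix t :: real
      have "(A + t *\<^sub>R (A ** ?X)) ** transpose (B + (- t) *\<^sub>R (B ** transpose ?X))
          = (A + t *\<^sub>R (A ** ?X)) ** (transpose B - t *\<^sub>R (?X ** transpose B))"
        by (simp add: tr_add tr_diff transpose_scalar matrix_transpose_mul)
      also have "\<dots> = A ** transpose B - (t * t) *\<^sub>R (A ** (?X ** ?X) ** transpose B)"
        by (simp add: mm_add_r mm_diff_l mm_scale_l mm_scale_r matrix_mul_assoc algebra_simps)
      also have "\<dots> = A ** transpose B" by (simp add: XX)
      finally show "(A + t *\<^sub>R (A ** ?X)) ** transpose (B + (- t) *\<^sub>R (B ** transpose ?X)) = A ** transpose B" .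
    qed (auto intro!: derivative_eq_intros)
    then show ?thesis by (simp add: inner_AE tr_E gram_sym[of B i j])
  next
    case True
    let ?X = "Eij i i"
    have XX: "?X ** ?X = ?X" using EE[of i i] by simp
    have "A \<bullet> (A ** ?X) = B \<bullet> (B ** ?X)"
    proof (rule path_lemma[OF lm lam, where a = "\<lambda>t. t" and b = "\<lambda>t. 1 / (1 + t) - 1"])
      fix t :: real assume t: "\<bar>t\<bar> < 1/2"
      define s where "s = 1 / (1 + t) - 1"
      have st: "s + t + t * s = 0" using t by (simp add: s_def field_simps)
      have AXX: "A ** ?X ** ?X = A ** ?X" by (simp add: matrix_mul_assoc[symmetric] XX)
      have "(A + t *\<^sub>R (A ** ?X)) ** transpose (B + s *\<^sub>R (B ** ?X))
          = (A + t *\<^sub>R (A ** ?X)) ** (transpose B + s *\<^sub>R (?X ** transpose B))"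
        by (simp add: tr_add transpose_scalar matrix_transpose_mul tr_E)
      also have "\<dots> = A ** transpose B + (s + t + t * s) *\<^sub>R (A ** ?X ** transpose B)"
        by (simp add: mm_add_r matrix_add_ldistrib mm_scale_l mm_scale_r matrix_mul_assoc algebra_simps
            AXX scaleR_add_left)
      also have "\<dots> = A ** transpose B" by (simp add: st)
      finally show "(A + t *\<^sub>R (A ** ?X)) ** transpose (B + (1 / (1 + t) - 1) *\<^sub>R (B ** ?X)) = A ** transpose B"
        by (simp add: s_def)
    next
      show "((\<lambda>t. 1 / (1 + t) - 1) has_real_derivative -1) (at 0)"
        by (rule derivative_eq_intros refl | simp)+
    qed (auto intro!: derivative_eq_intros)
    then show ?thesis using True by (simp add: inner_AE)
  qed
  then show ?thesis by (simp add: vec_eq_iff)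
qed



lemma cont_prod: "continuous_on UNIV (\<lambda>p::(real^'r^'m) \<times> (real^'r^'n). fst p ** transpose (snd p))"
  unfolding continuous_on_def
proof
  fix x :: "(real^'r^'m) \<times> (real^'r^'n)"
  have f: "((\<lambda>p. fst p) \<longlongrightarrow> fst x) (at x within UNIV)"
    using tendsto_fst[OF tendsto_ident_at[of x UNIV]] by simp
  have s: "((\<lambda>p. snd p) \<longlongrightarrow> snd x) (at x within UNIV)"
    using tendsto_snd[OF tendsto_ident_at[of x UNIV]] by simp
  show "((\<lambda>p. fst p ** transpose (snd p)) \<longlongrightarrow> fst x ** transpose (snd x)) (at x within UNIV)"
    by (rule tendsto_mm[OF f tendsto_tr[OF s]])
qed

lemma rank_prod_le: "rank ((A::real^'r^'m) ** transpose (B::real^'r^'n)) \<le> CARD('r)"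
  using rank_mul_le_left[of A "transpose B"] rank_bound[of A] by simp

lemma L2_bal:
  assumes bal: "transpose A ** A = transpose B ** B"
  shows "L_L2 L lam (A, B) = L_nuc L lam (A ** transpose B)"
proof -
  have "frob_sq B = frob_sq A" using frob_bal[OF bal] by simp
  then show ?thesis using nuc_bal[OF bal] by (simp add: L_L2_def L_nuc_def)
qed

lemma L2_ge: "0 \<le> lam \<Longrightarrow> L_nuc L lam (A ** transpose B) \<le> L_L2 L lam (A, B)"
proof -
  assume lam: "0 \<le> lam"
  have "lam * nuclear_norm (A ** transpose B) \<le> lam * ((frob_sq A + frob_sq B) / 2)"
    by (rule mult_left_mono[OF nuc_le lam])
  then show ?thesis by (simp add: L_L2_def L_nuc_def)
qed

lemma frob_mat1: "frob_sq (mat 1 :: real^'n^'n) = real CARD('n)"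
proof -
  have e: "((mat 1 :: real^'n^'n) $ i $ j)^2 = (if i = j then 1 else 0)" for i j
    by (simp add: mat_def)
  show ?thesis unfolding frob_sq_def e by simp
qed

lemma nuc_bound: "nuclear_norm (W::real^'n^'m) \<le> (frob_sq W + real CARD('n)) / 2"
  using nuc_le[of W "mat 1 :: real^'n^'n"] by (simp add: frob_mat1)

lemma conv_part:
  fixes A :: "real^'r^'m" and B :: "real^'r^'n"
  assumes lm: "local_min_on (L_nuc L lam) {W. rank W \<le> CARD('r)} (A ** transpose B)"
    and bal: "transpose A ** A = transpose B ** B" and lam: "lam > 0"
  shows "local_min_on (L_L2 L lam) UNIV (A, B)"
proof -
  obtain V where V: "open V" "A ** transpose B \<in> V"
    and mn: "\<And>y. y \<in> V \<inter> {W. rank W \<le> CARD('r)} \<Longrightarrow> L_nuc L lam (A ** transpose B) \<le> L_nuc L lam y"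
    using lm by (auto simp: local_min_on_def)
  define U where "U = (\<lambda>p::(real^'r^'m) \<times> (real^'r^'n). fst p ** transpose (snd p)) -` V"
  have oU: "open U" unfolding U_def by (rule open_vimage[OF V(1) cont_prod])
  have AB: "(A, B) \<in> U" using V by (simp add: U_def)
  have "L_L2 L lam (A, B) \<le> L_L2 L lam y" if "y \<in> U" for y
  proof -
    obtain A' B' where y: "y = (A', B')" by (cases y)
    have "A' ** transpose B' \<in> V \<inter> {W. rank W \<le> CARD('r)}"
      using that rank_prod_le[of A' B'] by (simp add: U_def y)
    then have "L_L2 L lam (A, B) \<le> L_nuc L lam (A' ** transpose B')"
      using mn L2_bal[OF bal] by simp
    also have "\<dots> \<le> L_L2 L lam y" using L2_ge[of lam L A' B'] lam by (simp add: y)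
    finally show ?thesis .
  qed
  then show ?thesis using oU AB by (auto simp: local_min_on_def)
qed

lemma rank_part:
  fixes A :: "real^'r^'m" and B :: "real^'r^'n"
  assumes lm: "local_min_on (L_L2 L lam) UNIV (A, B)"
    and bal: "transpose A ** A = transpose B ** B" and lam: "lam > 0"
  shows "local_min_on (L_nuc L lam) {W. rank W \<le> CARD('r)} (A ** transpose B)"
proof (rule ccontr)
  define W where "W = A ** transpose B"
  define R where "R = {W :: real^'n^'m. rank W \<le> CARD('r)}"
  have WR: "W \<in> R" using rank_prod_le[of A B] by (simp add: W_def R_def)
  assume "\<not> local_min_on (L_nuc L lam) {W. rank W \<le> CARD('r)} (A ** transpose B)"
  then have nlm: "\<not> local_min_on (L_nuc L lam) R W" by (simp add: W_def R_def)
  have nb: "\<exists>W'\<in>V \<inter> R. L_nuc L lam W' < L_nuc L lam W" if "open V" "W \<in> V" for V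
  proof (rule ccontr)
    assume "\<not> (\<exists>W'\<in>V \<inter> R. L_nuc L lam W' < L_nuc L lam W)"
    then have "\<forall>y\<in>V \<inter> R. L_nuc L lam W \<le> L_nuc L lam y" by (simp add: not_less)
    then have "local_min_on (L_nuc L lam) R W" using that WR unfolding local_min_on_def by blast
    with nlm show False by contradiction
  qed
  have "\<forall>k. \<exists>W'. W' \<in> R \<and> dist W' W < 1 / Suc k \<and> L_nuc L lam W' < L_nuc L lam W"
  proof
    fix k
    obtain W' where "W' \<in> ball W (1 / Suc k) \<inter> R" "L_nuc L lam W' < L_nuc L lam W"
      using nb[of "ball W (1 / Suc k)"] by auto
    then show "\<exists>W'. W' \<in> R \<and> dist W' W < 1 / Suc k \<and> L_nuc L lam W' < L_nuc L lam W"
      by (auto simp: dist_commute)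
  qed
  from choice[OF this] obtain Ws where Ws0: "\<forall>k. Ws k \<in> R \<and> dist (Ws k) W < 1 / Suc k
     \<and> L_nuc L lam (Ws k) < L_nuc L lam W" by blast
  have Ws: "\<And>k. Ws k \<in> R" "\<And>k. dist (Ws k) W < 1 / Suc k"
    "\<And>k. L_nuc L lam (Ws k) < L_nuc L lam W" using Ws0 by auto
  have Wlim: "Ws \<longlonglongrightarrow> W"
  proof (rule LIMSEQ_I)
    fix e :: real assume e: "0 < e"
    obtain N where N: "inverse (real (Suc N)) < e" using reals_Archimedean[OF e] by blast
    have "norm (Ws n - W) < e" if "n \<ge> N" for n
    proof -
      have "inverse (real (Suc n)) \<le> inverse (real (Suc N))" using that by (simp add: le_imp_inverse_le)
      moreover have "norm (Ws n - W) < inverse (real (Suc n))"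
        using Ws(2)[of n] by (simp add: dist_norm divide_inverse)
      ultimately show ?thesis using N by linarith
    qed
    then show "\<exists>no. \<forall>n\<ge>no. norm (Ws n - W) < e" by blast
  qed
  have "\<forall>k. \<exists>p::(real^'r^'m) \<times> (real^'r^'n). fst p ** transpose (snd p) = Ws k
      \<and> transpose (fst p) ** fst p = transpose (snd p) ** snd p"
  proof
    fix k
    obtain A' :: "real^'r^'m" and B' :: "real^'r^'n" where
      "A' ** transpose B' = Ws k \<and> transpose A' ** A' = transpose B' ** B'"
      using bal_exists[of "Ws k"] Ws(1)[of k] by (auto simp: R_def)
    then show "\<exists>p::(real^'r^'m) \<times> (real^'r^'n). fst p ** transpose (snd p) = Ws k
      \<and> transpose (fst p) ** fst p = transpose (snd p) ** snd p" by (intro exI[of _ "(A', B')"]) simp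
  qed
  from choice[OF this] obtain f :: "nat \<Rightarrow> (real^'r^'m) \<times> (real^'r^'n)" where
    f: "\<forall>k. fst (f k) ** transpose (snd (f k)) = Ws k
      \<and> transpose (fst (f k)) ** fst (f k) = transpose (snd (f k)) ** snd (f k)" by blast
  define As where "As k = fst (f k)" for k
  define Bs where "Bs k = snd (f k)" for k
  have AsBs: "\<And>k. As k ** transpose (Bs k) = Ws k"
    "\<And>k. transpose (As k) ** As k = transpose (Bs k) ** Bs k" using f by (auto simp: As_def Bs_def)
  define K where "K = ((norm W + 1)^2 + real CARD('n)) / 2"
  have fAs: "frob_sq (As k) \<le> K" for k
  proof -
    have "norm (Ws k) \<le> norm W + 1"
    proof -
      have "dist (Ws k) W < 1" using Ws(2)[of k] by (rule less_le_trans) (simp add: divide_le_eq)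
      then show ?thesis using norm_triangle_ineq2[of "Ws k" W] by (simp add: dist_norm)
    qed
    then have "frob_sq (Ws k) \<le> (norm W + 1)^2" by (simp add: frob_norm power_mono)
    moreover have "frob_sq (As k) = nuclear_norm (Ws k)" using nuc_bal[OF AsBs(2)] AsBs(1) by simp
    ultimately show ?thesis using nuc_bound[of "Ws k"] by (simp add: K_def)
  qed
  have "bounded (range (\<lambda>k. (As k, Bs k)))"
    unfolding bounded_iff
  proof (intro exI ballI)
    fix x assume "x \<in> range (\<lambda>k. (As k, Bs k))"
    then obtain k where x: "x = (As k, Bs k)" by auto
    have "norm x = sqrt (frob_sq (As k) + frob_sq (Bs k))" by (simp add: x norm_Pair frob_norm)
    also have "\<dots> \<le> sqrt (2 * K)" using fAs[of k] frob_bal[OF AsBs(2)[of k]] by simp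
    finally show "norm x \<le> sqrt (2 * K)" .
  qed
  then obtain l r where r: "strict_mono r" and lim: "((\<lambda>k. (As k, Bs k)) \<circ> r) \<longlonglongrightarrow> l"
    using bounded_imp_convergent_subsequence by blast
  obtain A0 B0 where l: "l = (A0, B0)" by (cases l)
  have limA: "(\<lambda>k. As (r k)) \<longlonglongrightarrow> A0" using tendsto_fst[OF lim] by (simp add: l o_def)
  have limB: "(\<lambda>k. Bs (r k)) \<longlonglongrightarrow> B0" using tendsto_snd[OF lim] by (simp add: l o_def)
  have c1: "(\<lambda>k. As (r k) ** transpose (Bs (r k))) \<longlonglongrightarrow> A0 ** transpose B0"
    by (intro tendsto_mm tendsto_tr limA limB)
  have c2: "(\<lambda>k. As (r k) ** transpose (Bs (r k))) \<longlonglongrightarrow> W"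
    using LIMSEQ_subseq_LIMSEQ[OF Wlim r] by (simp add: AsBs(1) o_def)
  have eq0: "A ** transpose B = A0 ** transpose B0"
    using LIMSEQ_unique[OF c2 c1] by (simp add: W_def)
  have c3: "(\<lambda>k. transpose (As (r k)) ** As (r k)) \<longlonglongrightarrow> transpose A0 ** A0"
    by (intro tendsto_mm tendsto_tr limA)
  have c4: "(\<lambda>k. transpose (As (r k)) ** As (r k)) \<longlonglongrightarrow> transpose B0 ** B0"
    unfolding AsBs(2) by (intro tendsto_mm tendsto_tr limB)
  have bal0: "transpose A0 ** A0 = transpose B0 ** B0" by (rule LIMSEQ_unique[OF c3 c4])
  obtain Q where Q: "orthogonal_matrix Q" "A0 = A ** Q" "B0 = B ** Q"
    using bal_unique[OF bal bal0 eq0] by blast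
  have QQ: "Q ** transpose Q = mat 1" "transpose Q ** Q = mat 1" using Q(1) by (auto simp: orthogonal_matrix_def)
  define P where "P k = (As (r k) ** transpose Q, Bs (r k) ** transpose Q)" for k
  have "P \<longlonglongrightarrow> (A0 ** transpose Q, B0 ** transpose Q)"
    unfolding P_def by (intro tendsto_Pair tendsto_mm limA limB tendsto_const)
  then have limP: "P \<longlonglongrightarrow> (A, B)" by (simp add: Q(2,3) matrix_mul_assoc[symmetric] QQ)
  obtain U where U: "open U" "(A, B) \<in> U" and mn: "\<And>y. y \<in> U \<Longrightarrow> L_L2 L lam (A, B) \<le> L_L2 L lam y"
    using lm by (auto simp: local_min_on_def)
  obtain k where kU: "P k \<in> U"
    using topological_tendstoD[OF limP U] by (auto simp: eventually_sequentially)
  have Pprod: "(As (r k) ** transpose Q) ** transpose (Bs (r k) ** transpose Q) = Ws (r k)"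
  proof -
    have "(As (r k) ** transpose Q) ** transpose (Bs (r k) ** transpose Q)
        = As (r k) ** (transpose Q ** Q) ** transpose (Bs (r k))"
      by (simp add: matrix_transpose_mul matrix_mul_assoc)
    then show ?thesis by (simp add: QQ AsBs(1))
  qed
  have Pbal: "transpose (As (r k) ** transpose Q) ** (As (r k) ** transpose Q)
      = transpose (Bs (r k) ** transpose Q) ** (Bs (r k) ** transpose Q)"
  proof -
    have e: "transpose (X ** transpose Q) ** (X ** transpose Q) = Q ** (transpose X ** X) ** transpose Q"
      for X :: "real^'r^'a" by (simp add: matrix_transpose_mul matrix_mul_assoc)
    show ?thesis unfolding e AsBs(2) ..
  qed
  have "L_nuc L lam W = L_L2 L lam (A, B)" using L2_bal[OF bal] by (simp add: W_def)
  also have "\<dots> \<le> L_L2 L lam (P k)" using mn[OF kU] .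
  also have "\<dots> = L_nuc L lam (Ws (r k))" unfolding P_def L2_bal[OF Pbal] Pprod ..
  also have "\<dots> < L_nuc L lam W" by (rule Ws(3))
  finally show False by simp
qed

theorem theorem1:
  fixes L :: "real^'n^'m \<Rightarrow> real"
    and lam :: real
    and A :: "real^'r^'m" and B :: "real^'r^'n"
  assumes "CARD('r) \<le> CARD('m)" and "CARD('r) \<le> CARD('n)"
    and "\<forall>W. L differentiable (at W)"
    and "lam > 0"
  shows "local_min_on (L_L2 L lam :: (real^'r^'m) \<times> (real^'r^'n) \<Rightarrow> real) UNIV (A, B) \<longleftrightarrow>
     (local_min_on (L_nuc L lam) {W. rank W \<le> CARD('r)} (A ** transpose B)
      \<and> transpose A ** A = transpose B ** B)"
proof
  assume lm: "local_min_on (L_L2 L lam :: (real^'r^'m) \<times> (real^'r^'n) \<Rightarrow> real) UNIV (A, B)"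
  have bal: "transpose A ** A = transpose B ** B" by (rule balanced_of_min[OF lm assms(4)])
  show "local_min_on (L_nuc L lam) {W. rank W \<le> CARD('r)} (A ** transpose B)
      \<and> transpose A ** A = transpose B ** B"
    using rank_part[OF lm bal assms(4)] bal by blast
next
  assume "local_min_on (L_nuc L lam) {W. rank W \<le> CARD('r)} (A ** transpose B)
      \<and> transpose A ** A = transpose B ** B"
  then show "local_min_on (L_L2 L lam :: (real^'r^'m) \<times> (real^'r^'n) \<Rightarrow> real) UNIV (A, B)"
    using conv_part assms(4) by blast
qed


end
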